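(* Let $\Delta\ge 4$ and $n\ge 3$ be integers. There exists a simple hamiltonian graph $G$ on $n$ vertices with maximum degree at most $\Delta$, diameter at most $2\,h(n,\Delta)$, and $$|E(G)|\le \Bigl(2-\frac{1}{\Delta-1}-\frac{(\Delta-2)^2}{(\Delta-1)^3}\Bigr)n+\frac{\Delta-3}{2}+2(\Delta-2).$$
   Context: Put $b=\Delta-1$. The complete $\Delta$-ary tree $T_{n,\Delta}$ is the rooted tree on vertex set $\{1,\dots,n\}$ with root $1$ in which the children of a vertex $i$ are the integers $j$ with $b(i-1)+2\le j\le bi+1$ and $j\le n$. Thus every vertex has at most $\Delta-1$ children, all levels except possibly the last are full, and the last level is filled from the left. The height $h(n,\Delta)$ of $T_{n,\Delta}$ is the largest distance from the root to a vertex. A graph is hamiltonian if it contains a cycle passing through every vertex exactly once; the diameter is the maximum graph distance between two vertices. *)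

theory Defs
  imports Complex_Main
begin

definition simple_graph :: "'a set \<Rightarrow> 'a set set \<Rightarrow> bool" where
  "simple_graph V E \<longleftrightarrow> finite V \<and> (\<forall>e\<in>E. \<exists>u v. u \<in> V \<and> v \<in> V \<and> u \<noteq> v \<and> e = {u, v})"

definition degree :: "'a set set \<Rightarrow> 'a \<Rightarrow> nat" where
  "degree E v = card {e \<in> E. v \<in> e}"

definition is_walk :: "'a set set \<Rightarrow> 'a list \<Rightarrow> bool" where
  "is_walk E xs \<longleftrightarrow> xs \<noteq> [] \<and> (\<forall>i. i + 1 < length xs \<longrightarrow> {xs ! i, xs ! (i + 1)} \<in> E)"

definition gdist :: "'a set set \<Rightarrow> 'a \<Rightarrow> 'a \<Rightarrow> nat" where
  "gdist E u v = (LEAST k. \<exists>xs. is_walk E xs \<and> hd xs = u \<and> last xs = v \<and> length xs = k + 1)"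

definition diameter :: "'a set \<Rightarrow> 'a set set \<Rightarrow> nat" where
  "diameter V E = Max {gdist E u v | u v. u \<in> V \<and> v \<in> V}"

definition hamiltonian :: "'a set \<Rightarrow> 'a set set \<Rightarrow> bool" where
  "hamiltonian V E \<longleftrightarrow> (\<exists>xs. distinct xs \<and> set xs = V \<and> 3 \<le> length xs \<and>
      (\<forall>i < length xs. {xs ! i, xs ! ((i + 1) mod length xs)} \<in> E))"

text \<open>Edges of the complete Delta-ary tree T(n,Delta) on {1..n}, with b = Delta - 1:
  children of i are the j with b(i-1)+2 \<le> j \<le> bi+1 and j \<le> n.\<close>
definition tree_edges :: "nat \<Rightarrow> nat \<Rightarrow> nat set set" where
  "tree_edges n \<Delta> = {{i, j} | i j. 1 \<le> i \<and> i \<le> n \<and>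
      (\<Delta> - 1) * (i - 1) + 2 \<le> j \<and> j \<le> (\<Delta> - 1) * i + 1 \<and> j \<le> n}"

definition tree_height :: "nat \<Rightarrow> nat \<Rightarrow> nat" where
  "tree_height n \<Delta> = Max {gdist (tree_edges n \<Delta>) 1 v | v. v \<in> {1..n}}"

end

theory Submission
  imports Defs
begin


definition par :: "nat \<Rightarrow> nat \<Rightarrow> nat" where "par b v = (v - 2) div b + 1"
definition kids :: "nat \<Rightarrow> nat \<Rightarrow> nat \<Rightarrow> nat list" where
  "kids b n v = [b*(v-1)+2 ..< min (b*v+2) (n+1)]"

lemma kids_gt: "x \<in> set (kids b n v) \<Longrightarrow> v < x \<and> x \<le> n"
proof -
  assume a: "x \<in> set (kids b n v)"
  hence x1: "b*(v-1)+2 \<le> x" "x < b*v+2" "x \<le> n" by (auto simp: kids_def)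
  show ?thesis
  proof (cases "v = 0 \<or> b = 0")
    case True thus ?thesis using x1 by auto
  next
    case False
    hence "b*(v-1) \<ge> v - 1" by simp
    thus ?thesis using x1 by linarith
  qed
qed

lemma par_lt: "2 \<le> v \<Longrightarrow> par b v < v"
  unfolding par_def using div_le_dividend[of "v-2" b] by linarith

lemma par_ge1: "1 \<le> par b v" by (simp add: par_def)

lemma par_le: assumes "1 \<le> v" shows "par b v \<le> v"
proof (cases "v \<ge> 2")
  case True thus ?thesis using par_lt[of v b] by simp
next
  case False thus ?thesis using assms by (simp add: par_def)
qed

lemma par_mono: "u \<le> v \<Longrightarrow> par b u \<le> par b v"
  unfolding par_def by (simp add: div_le_mono)

lemma kids_iff:
  assumes "b \<ge> 1" "1 \<le> v"
  shows "x \<in> set (kids b n v) \<longleftrightarrow> 2 \<le> x \<and> x \<le> n \<and> par b x = v"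
proof
  assume a: "x \<in> set (kids b n v)"
  hence x1: "b*(v-1)+2 \<le> x" "x < b*v+2" "x \<le> n" by (auto simp: kids_def)
  have "b * v = b*(v-1) + b" using assms by (cases v) auto
  hence "(x-2) div b = v - 1" using x1 by (intro div_nat_eqI) auto
  thus "2 \<le> x \<and> x \<le> n \<and> par b x = v" using x1 assms by (auto simp: par_def)
next
  assume a: "2 \<le> x \<and> x \<le> n \<and> par b x = v"
  hence d: "(x-2) div b = v - 1" by (auto simp: par_def)
  have "b * ((x-2) div b) \<le> x - 2" by (simp add: times_div_less_eq_dividend)
  moreover have "x - 2 < b * ((x-2) div b) + b" using assms
    by (metis add.commute mod_less_divisor mod_mult_div_eq nat_add_left_cancel_less
        not_one_le_zero zero_less_iff_neq_zero)
  moreover have "b * v = b*(v-1) + b" using assms by (cases v) auto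
  ultimately have "b*(v-1)+2 \<le> x" "x < b*v+2" using a d by auto
  thus "x \<in> set (kids b n v)" using a by (auto simp: kids_def)
qed

lemma length_kids: "length (kids b n v) \<le> b"
proof -
  have "b*v \<le> b*(v-1) + b" by (cases v) auto
  hence "min (b*v+2) (n+1) - (b*(v-1)+2) \<le> b" by linarith
  thus ?thesis by (simp only: kids_def length_upt)
qed


function ord :: "nat \<Rightarrow> nat \<Rightarrow> bool \<Rightarrow> nat \<Rightarrow> nat list" where
"ord b n c v = (case kids b n v of
    [] \<Rightarrow> [v]
  | k # ks \<Rightarrow> (if c then (case ks of [] \<Rightarrow> rev (ord b n False k) @ [v]
                                  | k2 # ks2 \<Rightarrow> rev (ord b n False k) @ v # ord b n False k2 @ concat (map (ord b n True) ks2))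
             else v # ord b n False k @ concat (map (ord b n True) ks)))"
  by pat_completeness auto
lemma kids_meas: "x \<in> set (kids b n v) \<Longrightarrow> n + 1 - x < n + 1 - v"
  using kids_gt by fastforce

termination
  apply (relation "measure (\<lambda>(b,n,c,v). n + 1 - v)")
  apply (auto simp del: One_nat_def)
  apply (metis kids_meas list.set_intros)+
  done

declare ord.simps[simp del]


lemma ord_nil: "kids b n v = [] \<Longrightarrow> ord b n c v = [v]"
  by (simp add: ord.simps)
lemma ord_F: "kids b n v = k # ks \<Longrightarrow> ord b n False v = v # ord b n False k @ concat (map (ord b n True) ks)"
  by (simp add: ord.simps)
lemma ord_T1: "kids b n v = [k] \<Longrightarrow> ord b n True v = rev (ord b n False k) @ [v]"
  by (simp add: ord.simps)
lemma ord_T2: "kids b n v = k # k2 # ks \<Longrightarrow>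
   ord b n True v = rev (ord b n False k) @ v # ord b n False k2 @ concat (map (ord b n True) ks)"
  by (simp add: ord.simps)

lemma ord_ind:
  assumes "\<And>c v. (\<And>c' x. x \<in> set (kids b n v) \<Longrightarrow> P c' x) \<Longrightarrow> P c v"
  shows "P c v"
proof -
  have "\<forall>c v. n + 1 - v = m \<longrightarrow> P c v" for m
  proof (induction m rule: less_induct)
    case (less m)
    show ?case
    proof (intro allI impI)
      fix c v assume "n + 1 - v = m"
      show "P c v"
      proof (rule assms)
        fix c' x assume "x \<in> set (kids b n v)"
        hence "n + 1 - x < m" using kids_meas \<open>n + 1 - v = m\<close> by blast
        thus "P c' x" using less by blast
      qed
    qed
  qed
  thus ?thesis by blast
qed

lemma kids_cases:
  obtains "kids b n v = []" | k where "kids b n v = [k]" | k k2 ks where "kids b n v = k # k2 # ks"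
  by (metis list.exhaust)

lemma v_in_ord: "v \<in> set (ord b n c v)"
  by (cases c; rule kids_cases[of b n v]) (auto simp: ord_nil ord_F ord_T1 ord_T2)

lemma ord_ne: "ord b n c v \<noteq> []"
  using v_in_ord[of v b n c] by (metis empty_iff empty_set)

lemma kid_sub:
  assumes "x \<in> set (kids b n v)"
  shows "\<exists>c'. set (ord b n c' x) \<subseteq> set (ord b n c v)"
proof (cases c)
  case True
  then show ?thesis
  proof (cases rule: kids_cases[of b n v])
    case 1 then show ?thesis using assms by simp
  next
    case (2 k) then show ?thesis using assms True by (auto simp: ord_T1)
  next
    case (3 k k2 ks)
    then show ?thesis using assms True
      by (auto simp: ord_T2)
  qed
next
  case False
  then show ?thesis
  proof (cases "kids b n v")
    case Nil then show ?thesis using assms by simp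
  next
    case (Cons k ks)
    then show ?thesis using assms False
      by (auto simp: ord_F)
  qed
qed


definition desc :: "nat \<Rightarrow> nat \<Rightarrow> nat \<Rightarrow> nat set" where
  "desc b n v = {u. 1 \<le> u \<and> u \<le> n \<and> (\<exists>j. (par b ^^ j) u = v)}"

lemma funpow_par_le: "1 \<le> u \<Longrightarrow> (par b ^^ j) u \<le> u \<and> 1 \<le> (par b ^^ j) u"
proof (induction j)
  case 0 then show ?case by simp
next
  case (Suc j)
  then show ?case using par_le[of "(par b ^^ j) u" b] par_ge1 by auto
qed

lemma desc_ge: "u \<in> desc b n v \<Longrightarrow> v \<le> u"
  unfolding desc_def using funpow_par_le by blast

lemma desc_self: "1 \<le> v \<Longrightarrow> v \<le> n \<Longrightarrow> v \<in> desc b n v"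
  unfolding desc_def by (auto intro: exI[of _ 0])

lemma desc_sub: "desc b n v \<subseteq> {1..n}"
  unfolding desc_def by auto

lemma desc_kid:
  assumes "b \<ge> 1" "1 \<le> v" "x \<in> set (kids b n v)"
  shows "desc b n x \<subseteq> desc b n v"
proof
  fix u assume "u \<in> desc b n x"
  then obtain j where j: "1 \<le> u" "u \<le> n" "(par b ^^ j) u = x" unfolding desc_def by auto
  have "par b x = v" using kids_iff[OF assms(1,2)] assms(3) by auto
  hence "(par b ^^ Suc j) u = v" using j by simp
  thus "u \<in> desc b n v" using j unfolding desc_def by blast
qed

lemma desc_disj:
  assumes "b \<ge> 1" "1 \<le> v" "x \<in> set (kids b n v)" "y \<in> set (kids b n v)" "x \<noteq> y"
  shows "desc b n x \<inter> desc b n y = {}"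
proof (rule ccontr)
  assume "desc b n x \<inter> desc b n y \<noteq> {}"
  then obtain u i j where u: "1 \<le> u" "(par b ^^ i) u = x" "(par b ^^ j) u = y"
    unfolding desc_def by auto
  have px: "par b x = v" "x > v" using kids_iff[OF assms(1,2)] assms(3) kids_gt[OF assms(3)] by auto
  have py: "par b y = v" "y > v" using kids_iff[OF assms(1,2)] assms(4) kids_gt[OF assms(4)] by auto
  have key: "\<And>p q i j. (par b ^^ i) u = p \<Longrightarrow> (par b ^^ j) u = q \<Longrightarrow> i < j \<Longrightarrow> par b p = v \<Longrightarrow> q > v \<Longrightarrow> False"
  proof -
    fix p q i j assume a: "(par b ^^ i) u = p" "(par b ^^ j) u = q" "i < j" "par b p = v" "q > v"
    define d where "d = j - i - 1"
    have d: "j = Suc d + i" using a(3) d_def by simp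
    have "q = (par b ^^ (Suc d + i)) u" using a(2) d by simp
    also have "\<dots> = (par b ^^ Suc d) p" using a(1) by (simp only: funpow_add o_apply)
    also have "\<dots> = (par b ^^ d) (par b p)" by (simp only: funpow_Suc_right o_apply)
    also have "\<dots> = (par b ^^ d) v" using a(4) by simp
    also have "\<dots> \<le> v" using funpow_par_le assms(2) by blast
    finally show False using a(5) by simp
  qed
  show False
  proof (cases i j rule: linorder_cases)
    case less then show ?thesis using key[OF u(2,3)] px py by blast
  next
    case equal then show ?thesis using u assms(5) by simp
  next
    case greater then show ?thesis using key[OF u(3,2)] px py by blast
  qed
qed

lemma distinct_concat_map:
  assumes "distinct ks" "\<And>k. k \<in> set ks \<Longrightarrow> distinct (f k) \<and> set (f k) \<subseteq> D k"
    "\<And>x y. x \<in> set ks \<Longrightarrow> y \<in> set ks \<Longrightarrow> x \<noteq> y \<Longrightarrow> D x \<inter> D y = {}"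
  shows "distinct (concat (map f ks)) \<and> set (concat (map f ks)) \<subseteq> \<Union> (D ` set ks)"
  using assms
proof (induction ks)
  case Nil then show ?case by simp
next
  case (Cons a ks)
  have ih: "distinct (concat (map f ks)) \<and> set (concat (map f ks)) \<subseteq> \<Union> (D ` set ks)"
    using Cons by auto
  have "set (f a) \<inter> set (concat (map f ks)) = {}"
  proof -
    have "set (f a) \<subseteq> D a" using Cons.prems by simp
    moreover have "D a \<inter> \<Union> (D ` set ks) = {}" using Cons.prems by fastforce
    ultimately show ?thesis using ih by blast
  qed
  then show ?case using ih Cons.prems by auto
qed

lemma distinct_kids: "distinct (kids b n v)" by (simp add: kids_def)

lemma set_distinct_ord:
  assumes "b \<ge> 1"
  shows "1 \<le> v \<Longrightarrow> v \<le> n \<Longrightarrow> distinct (ord b n c v) \<and> set (ord b n c v) \<subseteq> desc b n v"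
proof (induction c v rule: ord_ind[of b n])
  case (1 c v)
  have kv: "1 \<le> x \<and> x \<le> n" if "x \<in> set (kids b n v)" for x using kids_gt[OF that] "1.prems" by auto
  have IH: "distinct (ord b n c' x) \<and> set (ord b n c' x) \<subseteq> desc b n x" if "x \<in> set (kids b n v)" for c' x
    using "1.IH"[OF that] kv[OF that] by blast
  have DK: "desc b n x \<subseteq> desc b n v" if "x \<in> set (kids b n v)" for x
    using desc_kid[OF assms "1.prems"(1) that] .
  have DJ: "desc b n x \<inter> desc b n y = {}" if "x \<in> set (kids b n v)" "y \<in> set (kids b n v)" "x \<noteq> y" for x y
    using desc_disj[OF assms "1.prems"(1) that] .
  have vn: "v \<notin> desc b n x" if "x \<in> set (kids b n v)" for x
    using desc_ge[of v b n x] kids_gt[OF that] by auto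
  have vs: "v \<in> desc b n v" using desc_self "1.prems" by blast
  have CM: "\<And>ks. set ks \<subseteq> set (kids b n v) \<Longrightarrow> distinct ks \<Longrightarrow>
     distinct (concat (map (ord b n True) ks)) \<and> set (concat (map (ord b n True) ks)) \<subseteq> \<Union> (desc b n ` set ks)"
    apply (rule distinct_concat_map)
      apply simp
     apply (use IH in blast)
    using DJ by (meson subsetD)
  show ?case
  proof (cases rule: kids_cases[of b n v])
    case 1 then show ?thesis using vs by (simp add: ord_nil)
  next
    case (2 k)
    have "k \<in> set (kids b n v)" using 2 by simp
    have k1: "k \<in> set (kids b n v)" using 2 by simp
    have "ord b n c v = (if c then rev (ord b n False k) @ [v] else v # ord b n False k)"
      using ord_T1[OF 2] ord_F[OF 2] by simp
    then show ?thesis using IH[OF k1, of False] vn[OF k1] DK[OF k1] vs by auto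
  next
    case (3 k k2 ks)
    have dk: "distinct (k # k2 # ks)" using distinct_kids[of b n v] 3 by simp
    have cm: "distinct (concat (map (ord b n True) ks)) \<and> set (concat (map (ord b n True) ks)) \<subseteq> \<Union> (desc b n ` set ks)"
      using CM[of ks] 3 dk by auto
    have cm2: "distinct (concat (map (ord b n True) (k2#ks))) \<and> set (concat (map (ord b n True) (k2#ks))) \<subseteq> \<Union> (desc b n ` set (k2#ks))"
      using CM[of "k2#ks"] 3 dk by auto
    have i1: "k \<in> set (kids b n v)" "k2 \<in> set (kids b n v)" "\<And>x. x \<in> set ks \<Longrightarrow> x \<in> set (kids b n v)"
      using 3 by auto
    have d1: "desc b n k \<inter> desc b n k2 = {}" using DJ i1 dk by auto
    have d2a: "desc b n k \<inter> desc b n x = {}" "desc b n k2 \<inter> desc b n x = {}" if "x \<in> set ks" for x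
      using DJ[of k x] DJ[of k2 x] i1 dk that by auto
    have d2: "desc b n k \<inter> \<Union> (desc b n ` set ks) = {}" "desc b n k2 \<inter> \<Union> (desc b n ` set ks) = {}"
      using d2a by blast+
    have d3: "v \<notin> \<Union> (desc b n ` set ks)" using vn i1(3) by blast
    have sub: "\<Union> (desc b n ` set ks) \<subseteq> desc b n v" using DK i1(3) by blast
    show ?thesis
    proof (cases c)
      case True
      define A where "A = ord b n False k"
      define B where "B = ord b n False k2"
      define Cc where "Cc = concat (map (ord b n True) ks)"
      have a: "distinct A" "set A \<subseteq> desc b n k" using IH[of k False] i1 A_def by auto
      have bb: "distinct B" "set B \<subseteq> desc b n k2" using IH[of k2 False] i1 B_def by auto
      have cc: "distinct Cc" "set Cc \<subseteq> \<Union> (desc b n ` set ks)" using cm Cc_def by auto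
      have dis: "set A \<inter> set B = {}" "set A \<inter> set Cc = {}" "set B \<inter> set Cc = {}"
        using a bb cc d1 d2 by blast+
      have vv: "v \<notin> set A" "v \<notin> set B" "v \<notin> set Cc" using a bb cc vn[of k] vn[of k2] i1 d3 by blast+
      have ss: "set A \<subseteq> desc b n v" "set B \<subseteq> desc b n v" "set Cc \<subseteq> desc b n v"
        using a bb cc DK[of k] DK[of k2] i1 sub by blast+
      have e: "ord b n c v = rev A @ v # B @ Cc" using True ord_T2[OF 3] A_def B_def Cc_def by simp
      show ?thesis unfolding e
        using a bb cc dis vv ss vs by auto
    next
      case False
      have cm2': "set (concat (map (ord b n True) (k2#ks))) \<subseteq> desc b n v"
      proof -
        have "\<Union>(desc b n ` set (k2#ks)) \<subseteq> desc b n v" using DK[of k2] i1 sub by auto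
        thus ?thesis using cm2 by blast
      qed
      have d4: "desc b n k \<inter> \<Union> (desc b n ` set (k2#ks)) = {}" using d1 d2 by auto
      have d5: "v \<notin> \<Union> (desc b n ` set (k2#ks))" using d3 vn[of k2] i1 by auto
      define A where "A = ord b n False k"
      define Cc where "Cc = concat (map (ord b n True) (k2#ks))"
      have a: "distinct A" "set A \<subseteq> desc b n k" using IH[of k False] i1 A_def by auto
      have cc: "distinct Cc" "set Cc \<subseteq> \<Union> (desc b n ` set (k2#ks))" using cm2 Cc_def by auto
      have dis: "set A \<inter> set Cc = {}" using a cc d4 by blast
      have vv: "v \<notin> set A" "v \<notin> set Cc" using a cc vn[of k] i1 d5 by blast+
      have ss: "set A \<subseteq> desc b n v" "set Cc \<subseteq> desc b n v"
        using a cm2' DK[of k] i1 Cc_def by blast+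
      have e: "ord b n c v = v # A @ Cc" using False ord_F[OF 3] A_def Cc_def by simp
      show ?thesis unfolding e
        using a cc dis vv ss vs by auto
    qed
  qed
qed


definition Tadj :: "nat \<Rightarrow> nat \<Rightarrow> nat \<Rightarrow> bool" where
  "Tadj b x y \<longleftrightarrow> (2 \<le> x \<and> par b x = y) \<or> (2 \<le> y \<and> par b y = x)"
definition small :: "nat \<Rightarrow> nat \<Rightarrow> nat \<Rightarrow> bool" where
  "small b n x \<longleftrightarrow> length (kids b n x) \<le> 1"
definition PP :: "nat \<Rightarrow> nat \<Rightarrow> nat \<Rightarrow> nat \<Rightarrow> bool" where
  "PP b n x y \<longleftrightarrow> Tadj b x y \<or> (small b n x \<and> small b n y)"

lemma Tadj_sym: "Tadj b x y = Tadj b y x" by (auto simp: Tadj_def)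
lemma PP_sym: "(\<lambda>x y. PP b n y x) = PP b n" by (auto simp: PP_def Tadj_def fun_eq_iff)

lemma succ_rev_PP: "successively (PP b n) (rev xs) \<longleftrightarrow> successively (PP b n) xs"
  by (simp only: successively_rev PP_sym)

lemma kid_Tadj: "b \<ge> 1 \<Longrightarrow> 1 \<le> v \<Longrightarrow> k \<in> set (kids b n v) \<Longrightarrow> Tadj b k v \<and> Tadj b v k"
  using kids_iff by (auto simp: Tadj_def)

lemma succ_concat:
  assumes "\<And>k. k \<in> set ks \<Longrightarrow> f k \<noteq> [] \<and> successively (PP b n) (f k) \<and> small b n (hd (f k)) \<and> small b n (last (f k))"
  shows "successively (PP b n) (concat (map f ks)) \<and>
    (ks \<noteq> [] \<longrightarrow> concat (map f ks) \<noteq> [] \<and> small b n (hd (concat (map f ks))) \<and> small b n (last (concat (map f ks))))"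
  using assms
proof (induction ks)
  case Nil then show ?case by simp
next
  case (Cons a ks)
  have ih: "successively (PP b n) (concat (map f ks)) \<and>
    (ks \<noteq> [] \<longrightarrow> concat (map f ks) \<noteq> [] \<and> small b n (hd (concat (map f ks))) \<and> small b n (last (concat (map f ks))))"
    using Cons by auto
  have fa: "f a \<noteq> [] \<and> successively (PP b n) (f a) \<and> small b n (hd (f a)) \<and> small b n (last (f a))"
    using Cons.prems by simp
  show ?case
  proof (cases "ks = []")
    case True then show ?thesis using fa by simp
  next
    case False
    then show ?thesis using fa ih by (auto simp: successively_append_iff PP_def)
  qed
qed

lemma good_ord:
  assumes "b \<ge> 1"
  shows "1 \<le> v \<Longrightarrow> ord b n c v \<noteq> [] \<and> successively (PP b n) (ord b n c v) \<and> small b n (last (ord b n c v)) \<and>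
     (if c then small b n (hd (ord b n c v)) else hd (ord b n c v) = v)"
proof (induction c v rule: ord_ind[of b n])
  case (1 c v)
  have IH: "ord b n c' x \<noteq> [] \<and> successively (PP b n) (ord b n c' x) \<and> small b n (last (ord b n c' x)) \<and>
     (if c' then small b n (hd (ord b n c' x)) else hd (ord b n c' x) = v')"
    if "x \<in> set (kids b n v)" "\<not> c' \<Longrightarrow> v' = x" for c' x v'
    using "1.IH"[OF that(1)] kids_gt[OF that(1)] that(2) by (cases c') auto
  have TA: "PP b n k v \<and> PP b n v k" if "k \<in> set (kids b n v)" for k
    using kid_Tadj[OF assms "1.prems" that] by (auto simp: PP_def)
  have CM: "successively (PP b n) (concat (map (ord b n True) ks)) \<and>
    (ks \<noteq> [] \<longrightarrow> concat (map (ord b n True) ks) \<noteq> [] \<and> small b n (hd (concat (map (ord b n True) ks))) \<and> small b n (last (concat (map (ord b n True) ks))))"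
    if "set ks \<subseteq> set (kids b n v)" for ks
    apply (rule succ_concat)
    using IH[of _ True] that by auto
  show ?case
  proof (cases rule: kids_cases[of b n v])
    case 1 then show ?thesis by (simp add: ord_nil small_def)
  next
    case (2 k)
    have k1: "k \<in> set (kids b n v)" using 2 by simp
    have sv: "small b n v" using 2 by (simp add: small_def)
    have A: "ord b n False k \<noteq> [] \<and> successively (PP b n) (ord b n False k) \<and> small b n (last (ord b n False k)) \<and> hd (ord b n False k) = k"
      using IH[OF k1, of False k] by simp
    show ?thesis
    proof (cases c)
      case True
      have e: "ord b n c v = rev (ord b n False k) @ [v]" using True ord_T1[OF 2] by simp
      show ?thesis unfolding e using A TA[OF k1] sv True
        by (auto simp: successively_append_iff succ_rev_PP hd_rev last_rev simp del: successively_rev)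
    next
      case False
      have e: "ord b n c v = v # ord b n False k" using False ord_F[OF 2] by simp
      show ?thesis unfolding e using A TA[OF k1] False
        by (auto simp: successively_Cons)
    qed
  next
    case (3 k k2 ks)
    have k1: "k \<in> set (kids b n v)" "k2 \<in> set (kids b n v)" "set ks \<subseteq> set (kids b n v)" using 3 by auto
    have A: "ord b n False k \<noteq> [] \<and> successively (PP b n) (ord b n False k) \<and> small b n (last (ord b n False k)) \<and> hd (ord b n False k) = k"
      using IH[OF k1(1), of False k] by simp
    have B: "ord b n False k2 \<noteq> [] \<and> successively (PP b n) (ord b n False k2) \<and> small b n (last (ord b n False k2)) \<and> hd (ord b n False k2) = k2"
      using IH[OF k1(2), of False k2] by simp
    have Cs: "successively (PP b n) (concat (map (ord b n True) ks)) \<and>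
    (ks \<noteq> [] \<longrightarrow> concat (map (ord b n True) ks) \<noteq> [] \<and> small b n (hd (concat (map (ord b n True) ks))) \<and> small b n (last (concat (map (ord b n True) ks))))"
      using CM[OF k1(3)] .
    have C2: "successively (PP b n) (concat (map (ord b n True) (k2#ks))) \<and>
     (concat (map (ord b n True) (k2#ks)) \<noteq> [] \<and> small b n (hd (concat (map (ord b n True) (k2#ks)))) \<and> small b n (last (concat (map (ord b n True) (k2#ks)))))"
      using CM[of "k2#ks"] k1 by auto
    define Cc where "Cc = concat (map (ord b n True) ks)"
    have BC: "ord b n False k2 @ Cc \<noteq> [] \<and> successively (PP b n) (ord b n False k2 @ Cc) \<and>
       small b n (last (ord b n False k2 @ Cc)) \<and> hd (ord b n False k2 @ Cc) = k2"
    proof (cases "ks = []")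
      case True then show ?thesis using B Cc_def by simp
    next
      case False then show ?thesis using B Cs Cc_def by (auto simp: successively_append_iff PP_def)
    qed
    show ?thesis
    proof (cases c)
      case True
      have e: "ord b n c v = rev (ord b n False k) @ v # (ord b n False k2 @ Cc)" using True ord_T2[OF 3] Cc_def by simp
      show ?thesis unfolding e using A BC TA[OF k1(1)] TA[OF k1(2)] True
        by (auto simp: successively_append_iff successively_Cons succ_rev_PP hd_rev last_rev simp del: successively_rev)
    next
      case False
      have e: "ord b n c v = v # (ord b n False k @ concat (map (ord b n True) (k2#ks)))" using False ord_F[OF 3] by simp
      show ?thesis unfolding e using A C2 TA[OF k1(1)] False
        by (auto simp: successively_append_iff successively_Cons PP_def)
    qed
  qed
qed


function isC :: "nat \<Rightarrow> nat \<Rightarrow> bool" where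
 "isC b v = (if v \<le> 1 then True else ((v-2) mod b \<ge> 2 \<or> ((v-2) mod b = 1 \<and> \<not> isC b (par b v))))"
  by auto
termination
  by (relation "measure snd") (auto intro: par_lt)
declare isC.simps[simp del]

lemma isC_kid:
  assumes "b \<ge> 1" "1 \<le> v" "x \<in> set (kids b n v)"
  shows "isC b x \<longleftrightarrow> (x - (b*(v-1)+2) \<ge> 2 \<or> (x - (b*(v-1)+2) = 1 \<and> \<not> isC b v))"
proof -
  have x1: "b*(v-1)+2 \<le> x" "x < b*v+2" using assms(3) by (auto simp: kids_def)
  have pv: "par b x = v" using kids_iff[OF assms(1,2)] assms(3) by auto
  have bv: "b * v = b*(v-1) + b" using assms by (cases v) auto
  have "x - 2 = b*(v-1) + (x - (b*(v-1)+2))" using x1 by simp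
  moreover have "x - (b*(v-1)+2) < b" using x1 bv by linarith
  ultimately have m: "(x-2) mod b = x - (b*(v-1)+2)" by simp
  have "\<not> x \<le> 1" using x1 by simp
  thus ?thesis by (subst isC.simps) (simp add: m pv)
qed

lemma kids_Cons: assumes "kids b n v = k # ks" shows "k = b*(v-1)+2 \<and> (\<forall>x\<in>set ks. x \<ge> k + 1)"
proof -
  have "[b*(v-1)+2..<min (b*v+2) (n+1)] = k # ks" using assms by (simp only: kids_def)
  hence "b*(v-1)+2 = k \<and> [b*(v-1)+2+1..<min (b*v+2) (n+1)] = ks" using upt_eq_Cons_conv by blast
  thus ?thesis by auto
qed

lemma kids_Cons2: assumes "kids b n v = k # k2 # ks" shows "k = b*(v-1)+2 \<and> k2 = k + 1 \<and> (\<forall>x\<in>set ks. x \<ge> k + 2)"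
proof -
  have "[b*(v-1)+2..<min (b*v+2) (n+1)] = k # k2 # ks" using assms by (simp only: kids_def)
  hence "b*(v-1)+2 = k \<and> [b*(v-1)+2+1..<min (b*v+2) (n+1)] = k2 # ks" using upt_eq_Cons_conv by blast
  hence "b*(v-1)+2 = k \<and> b*(v-1)+2+1 = k2 \<and> [b*(v-1)+2+1+1..<min (b*v+2) (n+1)] = ks" using upt_eq_Cons_conv by blast
  thus ?thesis by auto
qed

fun cb :: "nat \<Rightarrow> nat list \<Rightarrow> nat" where
  "cb b (x # y # xs) = (if Tadj b x y then 0 else 1) + cb b (y # xs)"
| "cb b _ = 0"

lemma cb_Cons: "cb b (x # xs) = (if xs \<noteq> [] \<and> \<not> Tadj b x (hd xs) then 1 else 0) + cb b xs"
  by (cases xs) auto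

lemma cb_app: "cb b (xs @ ys) = cb b xs + cb b ys + (if xs \<noteq> [] \<and> ys \<noteq> [] \<and> \<not> Tadj b (last xs) (hd ys) then 1 else 0)"
  by (induction xs) (auto simp: cb_Cons)

lemma cb_rev: "cb b (rev xs) = cb b xs"
  by (induction xs) (auto simp: cb_app cb_Cons hd_rev last_rev Tadj_sym)

lemma length_filter_rev[simp]: "length (filter P (rev xs)) = length (filter P xs)"
  by (simp add: rev_filter[symmetric])

definition cC :: "nat \<Rightarrow> nat list \<Rightarrow> nat" where "cC b xs = length (filter (isC b) xs)"

lemma cb_concat:
  assumes "\<And>k. k \<in> set ks \<Longrightarrow> f k \<noteq> [] \<and> cb b (f k) + 1 \<le> cC b (f k)"
  shows "cb b (concat (map f ks)) + (if ks = [] then 0 else 1) \<le> cC b (concat (map f ks))"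
  using assms
proof (induction ks)
  case Nil then show ?case by (simp add: cC_def)
next
  case (Cons a ks)
  have ih: "cb b (concat (map f ks)) + (if ks = [] then 0 else 1) \<le> cC b (concat (map f ks))"
    using Cons by auto
  have fa: "f a \<noteq> [] \<and> cb b (f a) + 1 \<le> cC b (f a)" using Cons.prems by simp
  have ne: "ks \<noteq> [] \<Longrightarrow> concat (map f ks) \<noteq> []" using Cons.prems by (cases ks) auto
  have "cb b (concat (map f (a # ks))) \<le> cb b (f a) + cb b (concat (map f ks)) + (if ks = [] then 0 else 1)"
    using ne by (auto simp: cb_app)
  then show ?case using ih fa by (auto simp: cC_def)
qed

lemma cnt_ord:
  assumes "b \<ge> 1"
  shows "1 \<le> v \<Longrightarrow> (c \<longleftrightarrow> isC b v) \<Longrightarrow> cb b (ord b n c v) + (if c then 1 else 0) \<le> cC b (ord b n c v)"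
proof (induction c v rule: ord_ind[of b n])
  case (1 c v)
  have IH: "cb b (ord b n c' x) + (if c' then 1 else 0) \<le> cC b (ord b n c' x)"
    if "x \<in> set (kids b n v)" "c' \<longleftrightarrow> isC b x" for c' x
    using "1.IH"[OF that(1)] kids_gt[OF that(1)] that(2) by auto
  have TA: "Tadj b k v \<and> Tadj b v k" if "k \<in> set (kids b n v)" for k
    using kid_Tadj[OF assms "1.prems"(1) that] .
  have iC: "isC b x \<longleftrightarrow> (x - (b*(v-1)+2) \<ge> 2 \<or> (x - (b*(v-1)+2) = 1 \<and> \<not> isC b v))"
    if "x \<in> set (kids b n v)" for x using isC_kid[OF assms "1.prems"(1) that] .
  have hdo: "hd (ord b n False x) = x" "ord b n False x \<noteq> []" if "x \<in> set (kids b n v)" for x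
    using good_ord[OF assms, of x n False] kids_gt[OF that] by auto
  have CM: "cb b (concat (map (ord b n True) ks)) + (if ks = [] then 0 else 1) \<le> cC b (concat (map (ord b n True) ks))"
    if "set ks \<subseteq> set (kids b n v)" "\<And>x. x \<in> set ks \<Longrightarrow> isC b x" for ks
    apply (rule cb_concat)
    using IH[of _ True] that ord_ne by auto
  show ?case
  proof (cases rule: kids_cases[of b n v])
    case 1 then show ?thesis using "1.prems" by (auto simp: ord_nil cC_def)
  next
    case (2 k)
    have k1: "k \<in> set (kids b n v)" using 2 by simp
    have nk: "\<not> isC b k" using iC[OF k1] kids_Cons[OF 2] by simp
    have A: "cb b (ord b n False k) \<le> cC b (ord b n False k)" using IH[OF k1, of False] nk by simp
    show ?thesis
    proof (cases c)
      case True
      have e: "ord b n c v = rev (ord b n False k) @ [v]" using True ord_T1[OF 2] by simp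
      show ?thesis unfolding e using A TA[OF k1] True "1.prems" hdo[OF k1]
        by (auto simp: cb_app cb_rev cC_def hd_rev last_rev)
    next
      case False
      have e: "ord b n c v = v # ord b n False k" using False ord_F[OF 2] by simp
      show ?thesis unfolding e using A TA[OF k1] False hdo[OF k1]
        by (auto simp: cb_Cons cC_def)
    qed
  next
    case (3 k k2 ks)
    have k1: "k \<in> set (kids b n v)" "k2 \<in> set (kids b n v)" "set ks \<subseteq> set (kids b n v)" using 3 by auto
    have kc: "k = b*(v-1)+2" "k2 = k + 1" "\<And>x. x \<in> set ks \<Longrightarrow> x \<ge> k + 2" using kids_Cons2[OF 3] by auto
    have nk: "\<not> isC b k" using iC[OF k1(1)] kc by simp
    have A: "cb b (ord b n False k) \<le> cC b (ord b n False k)" using IH[OF k1(1), of False] nk by simp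
    have ksC: "isC b x" if "x \<in> set ks" for x
    proof -
      have "x \<in> set (kids b n v)" using k1(3) that by blast
      moreover have "x - (b*(v-1)+2) \<ge> 2" using kc(1) kc(3)[OF that] by linarith
      ultimately show ?thesis using iC by blast
    qed
    have Cs: "cb b (concat (map (ord b n True) ks)) + (if ks = [] then 0 else 1) \<le> cC b (concat (map (ord b n True) ks))"
      using CM[OF k1(3) ksC] .
    have cne: "ks \<noteq> [] \<Longrightarrow> concat (map (ord b n True) ks) \<noteq> []" using ord_ne by (cases ks) auto
    show ?thesis
    proof (cases c)
      case True
      have nk2: "\<not> isC b k2" using iC[OF k1(2)] kc True "1.prems" by simp
      have B: "cb b (ord b n False k2) \<le> cC b (ord b n False k2)" using IH[OF k1(2), of False] nk2 by simp
      define Cc where "Cc = concat (map (ord b n True) ks)"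
      have e: "ord b n c v = rev (ord b n False k) @ v # (ord b n False k2 @ Cc)" using True ord_T2[OF 3] Cc_def by simp
      have "cb b (ord b n False k2 @ Cc) \<le> cb b (ord b n False k2) + cb b Cc + (if ks = [] then 0 else 1)"
        using Cc_def cne by (auto simp: cb_app)
      then show ?thesis unfolding e using A B Cs TA[OF k1(1)] TA[OF k1(2)] True "1.prems" hdo[OF k1(1)] hdo[OF k1(2)] Cc_def
        by (auto simp: cb_app cb_Cons cb_rev cC_def hd_rev last_rev)
    next
      case False
      have ks2: "isC b x" if "x \<in> set (k2 # ks)" for x
      proof -
        have "x \<in> set (kids b n v)" using k1 that by auto
        moreover have "x - (b*(v-1)+2) \<ge> 1"
        proof (cases "x = k2")
          case True thus ?thesis using kc by simp
        next
          case False thus ?thesis using that kc(1) kc(3)[of x] by force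
        qed
        ultimately show ?thesis using iC False "1.prems" by auto
      qed
      have C2: "cb b (concat (map (ord b n True) (k2#ks))) + 1 \<le> cC b (concat (map (ord b n True) (k2#ks)))"
        using CM[of "k2#ks", OF _ ks2] k1 by auto
      define Cc where "Cc = concat (map (ord b n True) (k2#ks))"
      have e: "ord b n c v = v # (ord b n False k @ Cc)" using False ord_F[OF 3] Cc_def by simp
      have "cb b (ord b n False k @ Cc) \<le> cb b (ord b n False k) + cb b Cc + 1"
        by (auto simp: cb_app)
      then show ?thesis unfolding e using A C2 TA[OF k1(1)] False hdo[OF k1(1)] Cc_def
        by (auto simp: cb_Cons cC_def)
    qed
  qed
qed


definition Fc :: "nat \<Rightarrow> nat \<Rightarrow> nat" where "Fc b n = card {u \<in> {1..n}. isC b u}"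

lemma isC_1: "isC b (Suc 0)" by (simp add: isC.simps)

lemma Fc_0: "Fc b 0 = 0" by (simp add: Fc_def)

lemma Fc_Suc: "Fc b (Suc n) = Fc b n + (if isC b (Suc n) then 1 else 0)"
proof -
  have e: "{u \<in> {1..Suc n}. isC b u} = {u \<in> {1..n}. isC b u} \<union> (if isC b (Suc n) then {Suc n} else {})"
    by (auto simp: le_Suc_eq)
  show ?thesis unfolding Fc_def e by (auto simp: card_insert_if)
qed

lemma isC_block:
  assumes "b \<ge> 1" "i < b"
  shows "isC b (b*m + 2 + i) \<longleftrightarrow> (i \<ge> 2 \<or> (i = 1 \<and> \<not> isC b (m+1)))"
proof -
  have m: "(b*m + 2 + i - 2) mod b = i" using assms by simp
  have p: "par b (Suc (Suc (b*m + i))) = m + 1" using assms by (simp add: par_def)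
  have e: "b*m + 2 + i = Suc (Suc (b*m + i))" by simp
  show ?thesis unfolding e by (subst isC.simps) (simp add: p assms)
qed

lemma Fc_partial:
  assumes "b \<ge> 1" "r \<le> b"
  shows "Fc b (1 + b*m + r) = Fc b (1 + b*m) + (if r \<le> 1 then 0 else r - 2 + (if isC b (m+1) then 0 else 1))"
  using assms(2)
proof (induction r)
  case 0 then show ?case by simp
next
  case (Suc r)
  have "r < b" using Suc by simp
  have e: "1 + b*m + Suc r = Suc (b*m + 2 + r - 1)" by simp
  have c: "isC b (Suc (1 + b * m + r)) \<longleftrightarrow> (r \<ge> 2 \<or> (r = 1 \<and> \<not> isC b (m+1)))"
    using isC_block[OF assms(1) \<open>r < b\<close>, of m] by (simp add: add.commute add.left_commute)
  have "Fc b (1 + b*m + Suc r) = Fc b (1 + b*m + r) + (if isC b (Suc (1 + b * m + r)) then 1 else 0)"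
    by (simp add: Fc_Suc)
  then show ?case using Suc c by auto
qed

lemma Fc_block:
  assumes "b \<ge> 2"
  shows "int (Fc b (1 + b*m)) = 1 + (int b - 1) * int m - int (Fc b m)"
proof (induction m)
  case 0 
  have "{u \<in> {1..1}. isC b u} = {1}" using isC_1 by auto
  then show ?case by (simp add: Fc_def)
next
  case (Suc m)
  have b1: "b \<ge> 1" using assms by simp
  have "Fc b (1 + b*Suc m) = Fc b (1 + b*m + b)" by (simp add: algebra_simps)
  also have "\<dots> = Fc b (1 + b*m) + (b - 2 + (if isC b (m+1) then 0 else 1))"
    using Fc_partial[OF b1, of b m] assms by simp
  finally have e: "Fc b (1 + b*Suc m) = Fc b (1 + b*m) + (b - 2 + (if isC b (m+1) then 0 else 1))" .
  have f: "Fc b (Suc m) = Fc b m + (if isC b (Suc m) then 1 else 0)" by (rule Fc_Suc)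
  show ?case using e f Suc assms by (auto simp: algebra_simps of_nat_diff)
qed


function ell :: "nat \<Rightarrow> nat \<Rightarrow> nat" where
  "ell b n = (if n \<le> 1 then 0 else 1 + ell b ((n-1) div b))"
  by auto
termination
  apply (relation "measure snd")
   apply simp
  apply (simp add: le_less_trans[OF div_le_dividend])
  done
declare ell.simps[simp del]

lemma Xbound:
  assumes "b \<ge> 3"
  shows "\<bar>(int b + 1) * int (Fc b n) - (int b - 1) * int n\<bar> \<le> (2*int b - 4) * int (ell b n) + 2"
proof (induction n rule: less_induct)
  case (less n)
  show ?case
  proof (cases "n \<le> 1")
    case True
    then consider "n = 0" | "n = 1" by linarith
    then show ?thesis
    proof cases
      case 1 then show ?thesis by (simp add: Fc_def ell.simps)
    next
      case 2
      have "{u \<in> {1..1}. isC b u} = {1}" using isC_1 by auto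
      then show ?thesis using 2 by (simp add: Fc_def ell.simps)
    qed
  next
    case False
    define m where "m = (n-1) div b"
    define r where "r = (n-1) mod b"
    have b1: "b \<ge> 1" "b \<ge> 2" using assms by auto
    have n: "n = 1 + b*m + r" using False unfolding m_def r_def by simp
    have rb: "r < b" using b1 unfolding r_def by simp
    have "m \<le> b*m" using b1 by simp
    hence mn: "m < n" using n by linarith
    have el: "ell b n = 1 + ell b m" using False by (subst ell.simps) (simp add: m_def)
    define g :: int where "g = (if r \<le> 1 then 0 else int r - 2 + (if isC b (m+1) then 0 else 1))"
    have Fn: "int (Fc b n) = int (Fc b (1 + b*m)) + g"
      using Fc_partial[OF b1(1) less_imp_le[OF rb], of m] n unfolding g_def by (auto simp: of_nat_diff)
    have Fn2: "int (Fc b n) = 1 + (int b - 1) * int m - int (Fc b m) + g"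
      using Fn Fc_block[OF b1(2), of m] by simp
    define X where "X = (int b + 1) * int (Fc b m) - (int b - 1) * int m"
    define \<kappa> where "\<kappa> = 2 + (int b + 1) * g - (int b - 1) * int r"
    have id: "(int b + 1) * int (Fc b n) - (int b - 1) * int n = \<kappa> - X"
    proof -
      have nn: "int n = 1 + int b * int m + int r" using n by simp
      have "(int b + 1) * int (Fc b n) - (int b - 1) * int n =
        (int b + 1) * (1 + (int b - 1) * int m - int (Fc b m) + g) - (int b - 1) * (1 + int b * int m + int r)"
        by (simp only: Fn2 nn)
      also have "\<dots> = \<kappa> - X" unfolding X_def \<kappa>_def by (simp add: algebra_simps)
      finally show ?thesis .
    qed
    have kb: "\<bar>\<kappa>\<bar> \<le> 2 * int b - 4"
    proof (cases "r \<le> 1")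
      case True
      hence "r = 0 \<or> r = 1" by auto
      then show ?thesis using True assms unfolding \<kappa>_def g_def by auto
    next
      case False
      show ?thesis
      proof (cases "isC b (m+1)")
        case True
        have "\<kappa> = 2 * int r - 2 * int b" unfolding \<kappa>_def g_def using False True by (simp add: algebra_simps)
        then show ?thesis using False rb assms by linarith
      next
        case nC: False
        have "\<kappa> = 2 * int r - int b + 1" unfolding \<kappa>_def g_def using False nC by (simp add: algebra_simps)
        then show ?thesis using False rb assms by linarith
      qed
    qed
    have ih: "\<bar>X\<bar> \<le> (2*int b - 4) * int (ell b m) + 2" using less.IH[OF mn] unfolding X_def .
    show ?thesis unfolding id el using kb ih by (simp add: algebra_simps)
  qed
qed


lemma ell_ge: "ell b m \<ge> Suc k \<Longrightarrow> m \<ge> 2 \<and> ell b ((m-1) div b) \<ge> k"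
proof -
  assume a: "ell b m \<ge> Suc k"
  have "\<not> m \<le> 1" using a by (auto simp: ell.simps)
  moreover have "ell b m = 1 + ell b ((m-1) div b)" using calculation by (subst ell.simps) simp
  ultimately show ?thesis using a by auto
qed

lemma divb_ge: "(q::nat) \<le> (m-1) div b \<Longrightarrow> m \<ge> 1 \<Longrightarrow> b*q + 1 \<le> m"
proof -
  assume "q \<le> (m-1) div b" "m \<ge> 1"
  moreover have "b * ((m-1) div b) \<le> m - 1" by (metis times_div_less_eq_dividend)
  ultimately have "b*q \<le> m - 1" using mult_le_mono2 le_trans by blast
  thus ?thesis using \<open>m \<ge> 1\<close> by linarith
qed

lemma ell_big: assumes "ell b m \<ge> 3" shows "m \<ge> 2*b^2 + b + 1"
proof -
  have a: "m \<ge> 2" "ell b ((m-1) div b) \<ge> 2" using ell_ge[of 2 b m] assms by auto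
  define m1 where "m1 = (m-1) div b"
  have b1: "m1 \<ge> 2" "ell b ((m1-1) div b) \<ge> 1" using ell_ge[of 1 b m1] a m1_def by auto
  define m2 where "m2 = (m1-1) div b"
  have "m2 \<ge> 2" using ell_ge[of 0 b m2] b1 m2_def by auto
  hence "b*2 + 1 \<le> m1" using divb_ge[of 2 m1 b] b1 m2_def by simp
  hence "b*(2*b+1) + 1 \<le> m" using divb_ge[of "2*b+1" m b] a m1_def by simp
  thus ?thesis by (simp add: power2_eq_square algebra_simps)
qed

lemma ell_bound:
  assumes "b \<ge> 3"
  shows "(2*real b - 4) * real (ell b n) \<le> (real b - 1) * real n / real b^3 + (5*real b - 6)*(real b + 1)/2"
proof (induction n rule: less_induct)
  case (less n)
  define B where "B = real b"
  have B3: "B \<ge> 3" using assms B_def by simp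
  have K: "3 * (2*B - 4) \<le> (5*B - 6)*(B + 1)/2"
  proof -
    have "B*(5*B - 13) \<ge> 0" using B3 by simp
    thus ?thesis by (simp add: algebra_simps)
  qed
  show ?case
  proof (cases "ell b n \<le> 3")
    case True
    have "(2*B - 4) * real (ell b n) \<le> (2*B - 4) * 3"
      using True B3 by (intro mult_left_mono) auto
    moreover have "(B - 1) * real n / B^3 \<ge> 0" using B3 by simp
    ultimately show ?thesis using K unfolding B_def by linarith
  next
    case False
    have n2: "n \<ge> 2" using ell_ge[of 3 b n] False by simp
    define m where "m = (n-1) div b"
    have el: "ell b n = 1 + ell b m" using n2 by (subst ell.simps) (simp add: m_def)
    have m3: "ell b m \<ge> 3" using False el by simp
    have mb: "m \<ge> 2*b^2 + b + 1" using ell_big[OF m3] .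
    have nm: "b*m + 1 \<le> n" using divb_ge[of m n b] n2 m_def by simp
    have "m \<le> b*m" using assms by simp
    hence mn: "m < n" using nm by linarith
    have IH: "(2*B - 4) * real (ell b m) \<le> (B - 1) * real m / B^3 + (5*B - 6)*(B + 1)/2"
      using less.IH[OF mn] unfolding B_def .
    define M where "M = real m"
    define N where "N = real n"
    have MB: "M \<ge> 2*B^2 + B + 1"
    proof -
      have "real (2*b^2 + b + 1) \<le> real m" using mb by (simp only: of_nat_le_iff)
      thus ?thesis unfolding M_def B_def by simp
    qed
    have NM: "B*M + 1 \<le> N" using nm unfolding M_def N_def B_def by (metis of_nat_add of_nat_le_iff of_nat_mult of_nat_1)
    have h1: "(B-1)^2 * M \<ge> (B-1)^2 * (2*B^2 + B + 1)" using MB by (intro mult_left_mono) auto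
    have h2: "(B-1)^2 * (2*B^2 + B + 1) - (2*B - 4)*B^3 = B^3 + B^2 - B + 1"
      by (simp add: algebra_simps power2_eq_square power3_eq_cube)
    have h3: "B^3 + B^2 - B + 1 \<ge> 0"
    proof -
      have "B*B \<ge> 3*3" using B3 by (intro mult_mono) auto
      hence "B*B \<ge> 1" by simp
      hence "B*(B*B) \<ge> B*1" using B3 by (intro mult_left_mono) auto
      hence "B^3 \<ge> B" by (simp add: power3_eq_cube)
      moreover have "B^2 \<ge> 0" by simp
      ultimately show ?thesis by linarith
    qed
    have h4: "(B-1)*(N - M) \<ge> (B-1)^2 * M"
    proof -
      have "N - M \<ge> (B-1)*M" using NM by (simp add: algebra_simps)
      hence "(B-1)*(N-M) \<ge> (B-1)*((B-1)*M)" using B3 by (intro mult_left_mono) auto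
      thus ?thesis by (simp add: power2_eq_square algebra_simps)
    qed
    have h5: "(2*B - 4)*B^3 \<le> (B-1)*(N - M)" using h1 h2 h3 h4 by linarith
    have Bp: "B^3 > 0" using B3 by simp
    have h6: "2*B - 4 \<le> (B-1)*N/B^3 - (B-1)*M/B^3"
    proof -
      have "2*B - 4 \<le> (B-1)*(N - M)/B^3" using h5 Bp by (simp add: pos_le_divide_eq)
      moreover have "(B-1)*(N - M)/B^3 = (B-1)*N/B^3 - (B-1)*M/B^3" by (simp add: right_diff_distrib diff_divide_distrib)
      ultimately show ?thesis by simp
    qed
    have "(2*B - 4) * real (ell b n) = (2*B - 4) + (2*B - 4) * real (ell b m)"
      using el by (simp add: algebra_simps)
    also have "\<dots> \<le> (B-1)*N/B^3 + (5*B - 6)*(B + 1)/2" using IH h6 unfolding M_def by linarith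
    finally show ?thesis unfolding B_def N_def .
  qed
qed


lemma cb_card: "card {i. Suc i < length xs \<and> \<not> Tadj b (xs!i) (xs!Suc i)} \<le> cb b xs"
proof (induction b xs rule: cb.induct)
  case (1 b x y xs)
  let ?S = "{i. Suc i < length (x#y#xs) \<and> \<not> Tadj b ((x#y#xs)!i) ((x#y#xs)!Suc i)}"
  let ?S' = "{i. Suc i < length (y#xs) \<and> \<not> Tadj b ((y#xs)!i) ((y#xs)!Suc i)}"
  have sub: "?S \<subseteq> (if Tadj b x y then {} else {0}) \<union> Suc ` ?S'"
  proof
    fix i assume iS: "i \<in> ?S"
    show "i \<in> (if Tadj b x y then {} else {0}) \<union> Suc ` ?S'"
    proof (cases i)
      case 0 then show ?thesis using iS by auto
    next
      case (Suc j)
      then have "j \<in> ?S'" using iS by auto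
      thus ?thesis using Suc by blast
    qed
  qed
  have fin: "finite ?S'" by (rule finite_subset[of _ "{..<length (y#xs)}"]) auto
  have "card ?S \<le> card ((if Tadj b x y then {} else {0}) \<union> Suc ` ?S')"
    by (rule card_mono[OF _ sub]) (use fin in auto)
  also have "\<dots> \<le> card (if Tadj b x y then {} else {0::nat}) + card (Suc ` ?S')" by (rule card_Un_le)
  also have "\<dots> \<le> (if Tadj b x y then 0 else 1) + card ?S'" using card_image_le[OF fin, of Suc] by auto
  finally show ?case using "1.IH" by simp
next
  case ("2_1" b) then show ?case by simp
next
  case ("2_2" b v) then show ?case by simp
qed

locale hc =
  fixes b n :: nat
  assumes b3: "b \<ge> 3" and n3: "n \<ge> 3"
begin

abbreviation "xs \<equiv> ord b n True 1"
definition "Tr = (\<lambda>j. {par b j, j}) ` {2..n}"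
definition "Cyc = (\<lambda>i. {xs!i, xs!((i+1) mod n)}) ` {..<n}"

lemma b1: "b \<ge> 1" using b3 by simp

lemma xs_dist: "distinct xs" and xs_sub: "set xs \<subseteq> {1..n}"
  using set_distinct_ord[OF b1, of 1 n True] desc_sub[of b n 1] n3 by auto

lemma cover: "1 \<le> u \<Longrightarrow> u \<le> n \<Longrightarrow> \<exists>c. set (ord b n c u) \<subseteq> set xs"
proof (induction u rule: less_induct)
  case (less u)
  show ?case
  proof (cases "u = 1")
    case True then show ?thesis by blast
  next
    case False
    hence u2: "u \<ge> 2" using less by simp
    have pu: "par b u < u" "1 \<le> par b u" using par_lt[OF u2] par_ge1 by auto
    have "par b u \<le> n" using pu less by simp
    then obtain c where c: "set (ord b n c (par b u)) \<subseteq> set xs" using less.IH[OF pu(1) pu(2)] by blast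
    have "u \<in> set (kids b n (par b u))" using kids_iff[OF b1 pu(2)] u2 less by simp
    then obtain c' where "set (ord b n c' u) \<subseteq> set (ord b n c (par b u))" using kid_sub by blast
    then show ?thesis using c by blast
  qed
qed

lemma xs_set: "set xs = {1..n}"
proof
  show "set xs \<subseteq> {1..n}" by (rule xs_sub)
  show "{1..n} \<subseteq> set xs"
  proof
    fix u assume "u \<in> {1..n}"
    then obtain c where "set (ord b n c u) \<subseteq> set xs" using cover by auto
    thus "u \<in> set xs" using v_in_ord by blast
  qed
qed

lemma xs_len: "length xs = n"
  using distinct_card[OF xs_dist] xs_set by simp

lemma xs_good: "successively (PP b n) xs" "small b n (last xs)" "small b n (hd xs)"
  using good_ord[OF b1, of 1 n True] by auto

lemma cycPP: "i < n \<Longrightarrow> PP b n (xs!i) (xs!((i+1) mod n))"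
proof -
  assume i: "i < n"
  show ?thesis
  proof (cases "i + 1 < n")
    case True
    hence "Suc i < length xs" using xs_len by simp
    hence "PP b n (xs!i) (xs!Suc i)" by (rule successively_nth[OF xs_good(1)])
    moreover have "(i+1) mod n = Suc i" using True by simp
    ultimately show ?thesis by simp
  next
    case False
    hence "i = n - 1" using i by simp
    have ne: "xs \<noteq> []" using ord_ne[of b n True 1] .
    have e1: "xs!i = last xs" using \<open>i = n - 1\<close> last_conv_nth[OF ne] xs_len by simp
    have "(i+1) mod n = 0" using \<open>i = n - 1\<close> n3 by simp
    hence e2: "xs!((i+1) mod n) = hd xs" using hd_conv_nth[OF ne] by simp
    note e = e1 e2
    show ?thesis unfolding e using xs_good by (simp add: PP_def)
  qed
qed

lemma xs_in: assumes "i < n" shows "xs!i \<in> {1..n}"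
proof -
  have "xs!i \<in> set xs" using assms xs_len by (intro nth_mem) simp
  thus ?thesis using xs_set by simp
qed

lemma Tadj_Tr: assumes "Tadj b x y" "x \<in> {1..n}" "y \<in> {1..n}" shows "{x,y} \<in> Tr"
proof (cases "2 \<le> x \<and> par b x = y")
  case True
  hence "{x,y} = {par b x, x}" by (simp add: insert_commute)
  moreover have "x \<in> {2..n}" using True assms by simp
  ultimately show ?thesis unfolding Tr_def by blast
next
  case False
  hence T: "2 \<le> y \<and> par b y = x" using assms(1) unfolding Tadj_def by blast
  hence "{x,y} = {par b y, y}" by simp
  moreover have "y \<in> {2..n}" using T assms by simp
  ultimately show ?thesis unfolding Tr_def by blast
qed

lemma Tr_card: "card Tr \<le> n - 1"
proof -
  have "card Tr \<le> card {2..n}" unfolding Tr_def by (rule card_image_le) simp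
  thus ?thesis by simp
qed

end


lemma card_pair_le: "card {x, y} \<le> 2" by (cases "x = y") auto

context hc begin

lemma tree_at: assumes "v \<in> {1..n}" shows "card {e\<in>Tr. v\<in>e} \<le> 1 + length (kids b n v)"
proof -
  have "{e\<in>Tr. v\<in>e} \<subseteq> insert {par b v, v} ((\<lambda>k. {v,k}) ` set (kids b n v))"
  proof
    fix e assume "e \<in> {e\<in>Tr. v\<in>e}"
    then obtain j where j: "j \<in> {2..n}" "e = {par b j, j}" "v \<in> e" unfolding Tr_def by auto
    show "e \<in> insert {par b v, v} ((\<lambda>k. {v,k}) ` set (kids b n v))"
    proof (cases "v = j")
      case True then show ?thesis using j by simp
    next
      case False
      hence pv: "v = par b j" using j by auto
      have v1: "1 \<le> v" using pv par_ge1 by simp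
      have "2 \<le> j \<and> j \<le> n \<and> par b j = v" using j pv by simp
      hence "j \<in> set (kids b n v)" using kids_iff[OF b1 v1] by blast
      then show ?thesis using j pv by auto
    qed
  qed
  hence "card {e\<in>Tr. v\<in>e} \<le> card (insert {par b v, v} ((\<lambda>k. {v,k}) ` set (kids b n v)))"
    by (intro card_mono) simp_all
  also have "\<dots> \<le> Suc (card ((\<lambda>k. {v,k}) ` set (kids b n v)))" by (simp add: card_insert_if)
  also have "\<dots> \<le> Suc (card (set (kids b n v)))" using card_image_le by auto
  also have "\<dots> \<le> 1 + length (kids b n v)" using card_length by auto
  finally show ?thesis .
qed

lemma cyc_at: assumes "v \<in> {1..n}" shows "card {e\<in>Cyc. v\<in>e} \<le> 2"
proof -
  obtain j where j: "j < n" "xs!j = v" using assms xs_set xs_len by (metis in_set_conv_nth)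
  define i' where "i' = (j + n - 1) mod n"
  have "{e\<in>Cyc. v\<in>e} \<subseteq> {{xs!j, xs!((j+1) mod n)}, {xs!i', xs!((i'+1) mod n)}}"
  proof
    fix e assume "e \<in> {e\<in>Cyc. v\<in>e}"
    then obtain i where i: "i < n" "e = {xs!i, xs!((i+1) mod n)}" "v \<in> e" unfolding Cyc_def by auto
    have mn: "(i+1) mod n < n" using n3 by simp
    show "e \<in> {{xs!j, xs!((j+1) mod n)}, {xs!i', xs!((i'+1) mod n)}}"
    proof (cases "xs!i = v")
      case True
      hence "i = j" using nth_eq_iff_index_eq[OF xs_dist, of i j] i j xs_len by simp
      then show ?thesis using i by simp
    next
      case False
      hence "xs!((i+1) mod n) = v" using i by auto
      hence ij: "(i+1) mod n = j" using nth_eq_iff_index_eq[OF xs_dist, of "(i+1) mod n" j] mn j xs_len by simp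
      have "i = i'"
      proof (cases "i + 1 < n")
        case True
        hence "j = i + 1" using ij by simp
        thus ?thesis unfolding i'_def using i by simp
      next
        case False
        hence si: "Suc i = n" using i by simp
        hence "j = 0" using ij by simp
        thus ?thesis unfolding i'_def using n3 si by simp
      qed
      then show ?thesis using i by simp
    qed
  qed
  hence "card {e\<in>Cyc. v\<in>e} \<le> card {{xs!j, xs!((j+1) mod n)}, {xs!i', xs!((i'+1) mod n)}}"
    by (intro card_mono) auto
  also have "\<dots> \<le> 2" by (rule card_pair_le)
  finally show ?thesis .
qed

lemma cyc_T: assumes "v \<in> {1..n}" "\<not> small b n v" shows "{e\<in>Cyc. v\<in>e} \<subseteq> Tr"
proof
  fix e assume "e \<in> {e\<in>Cyc. v\<in>e}"
  then obtain i where i: "i < n" "e = {xs!i, xs!((i+1) mod n)}" "v \<in> e" unfolding Cyc_def by auto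
  have P: "PP b n (xs!i) (xs!((i+1) mod n))" using cycPP[OF i(1)] .
  have "Tadj b (xs!i) (xs!((i+1) mod n))" using P i(2,3) assms(2) unfolding PP_def by auto
  moreover have "(i+1) mod n < n" using n3 by simp
  ultimately show "e \<in> Tr" using Tadj_Tr xs_in i by simp
qed

lemma deg: assumes "v \<in> {1..n}" shows "degree (Tr \<union> Cyc) v \<le> b + 1"
proof -
  have e: "{e \<in> Tr \<union> Cyc. v \<in> e} = {e\<in>Tr. v\<in>e} \<union> {e\<in>Cyc. v\<in>e}" by auto
  show ?thesis
  proof (cases "small b n v")
    case True
    have "degree (Tr \<union> Cyc) v \<le> card {e\<in>Tr. v\<in>e} + card {e\<in>Cyc. v\<in>e}"
      unfolding degree_def e by (rule card_Un_le)
    also have "\<dots> \<le> (1 + 1) + 2" using tree_at[OF assms] cyc_at[OF assms] True unfolding small_def by linarith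
    finally show ?thesis using b3 by simp
  next
    case False
    have "{e \<in> Tr \<union> Cyc. v \<in> e} = {e\<in>Tr. v\<in>e}" using cyc_T[OF assms False] e by auto
    hence "degree (Tr \<union> Cyc) v \<le> 1 + length (kids b n v)" unfolding degree_def using tree_at[OF assms] by simp
    thus ?thesis using length_kids[of b n v] by simp
  qed
qed

lemma cC_xs: "cC b xs = Fc b n"
proof -
  have "length (filter (isC b) xs) = card ({x. isC b x} \<inter> set xs)" by (rule distinct_length_filter[OF xs_dist])
  moreover have "{x. isC b x} \<inter> set xs = {u \<in> {1..n}. isC b u}" unfolding xs_set by auto
  ultimately show ?thesis unfolding cC_def Fc_def by simp
qed

lemma edges: "card (Tr \<union> Cyc) \<le> (n - 1) + Fc b n"
proof -
  define S where "S = {i. i < n \<and> \<not> Tadj b (xs!i) (xs!((i+1) mod n))}"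
  have s1: "Cyc - Tr \<subseteq> (\<lambda>i. {xs!i, xs!((i+1) mod n)}) ` S"
  proof
    fix e assume "e \<in> Cyc - Tr"
    then obtain i where i: "i < n" "e = {xs!i, xs!((i+1) mod n)}" "e \<notin> Tr" unfolding Cyc_def by auto
    have "(i+1) mod n < n" using n3 by simp
    hence "xs!((i+1) mod n) \<in> {1..n}" by (rule xs_in)
    hence "\<not> Tadj b (xs!i) (xs!((i+1) mod n))" using Tadj_Tr[OF _ xs_in[OF i(1)]] i(2,3) by blast
    thus "e \<in> (\<lambda>i. {xs!i, xs!((i+1) mod n)}) ` S" using i S_def by blast
  qed
  have s2: "S \<subseteq> insert (n-1) {i. Suc i < length xs \<and> \<not> Tadj b (xs!i) (xs!Suc i)}"
  proof
    fix i assume "i \<in> S"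
    hence i: "i < n" "\<not> Tadj b (xs!i) (xs!((i+1) mod n))" unfolding S_def by auto
    show "i \<in> insert (n-1) {i. Suc i < length xs \<and> \<not> Tadj b (xs!i) (xs!Suc i)}"
    proof (cases "i + 1 < n")
      case True
      hence "(i+1) mod n = Suc i" by simp
      then show ?thesis using i True xs_len by simp
    next
      case False
      hence "i = n - 1" using i by simp
      then show ?thesis by simp
    qed
  qed
  have fin: "finite {i. Suc i < length xs \<and> \<not> Tadj b (xs!i) (xs!Suc i)}"
    by (rule finite_subset[of _ "{..<length xs}"]) auto
  have "card S \<le> card (insert (n-1) {i. Suc i < length xs \<and> \<not> Tadj b (xs!i) (xs!Suc i)})"
    using s2 fin by (intro card_mono) auto
  also have "\<dots> \<le> Suc (card {i. Suc i < length xs \<and> \<not> Tadj b (xs!i) (xs!Suc i)})"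
    using fin by (simp add: card_insert_if)
  also have "\<dots> \<le> Suc (cb b xs)" using cb_card by simp
  also have "\<dots> \<le> cC b xs" using cnt_ord[OF b1, of 1 True n] isC_1 by simp
  finally have cS: "card S \<le> Fc b n" using cC_xs by simp
  have finS: "finite S" unfolding S_def by simp
  have "card (Cyc - Tr) \<le> card ((\<lambda>i. {xs!i, xs!((i+1) mod n)}) ` S)"
    using s1 finS by (intro card_mono) auto
  also have "\<dots> \<le> card S" by (rule card_image_le[OF finS])
  finally have cC: "card (Cyc - Tr) \<le> Fc b n" using cS by simp
  have "Tr \<union> Cyc = Tr \<union> (Cyc - Tr)" by auto
  hence "card (Tr \<union> Cyc) \<le> card Tr + card (Cyc - Tr)" using card_Un_le[of Tr "Cyc - Tr"] by simp
  thus ?thesis using Tr_card cC by simp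
qed

lemma simple: "simple_graph {1..n} (Tr \<union> Cyc)"
  unfolding simple_graph_def
proof (intro conjI ballI)
  show "finite {1..n}" by simp
  fix e assume "e \<in> Tr \<union> Cyc"
  then show "\<exists>u v. u \<in> {1..n} \<and> v \<in> {1..n} \<and> u \<noteq> v \<and> e = {u, v}"
  proof
    assume "e \<in> Tr"
    then obtain j where j: "j \<in> {2..n}" "e = {par b j, j}" unfolding Tr_def by auto
    have "par b j < j" "1 \<le> par b j" using par_lt par_ge1 j by auto
    then show ?thesis using j by (intro exI[of _ "par b j"] exI[of _ j]) auto
  next
    assume "e \<in> Cyc"
    then obtain i where i: "i < n" "e = {xs!i, xs!((i+1) mod n)}" unfolding Cyc_def by auto
    have m: "(i+1) mod n < n" using n3 by simp
    have "i \<noteq> (i+1) mod n"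
    proof (cases "i + 1 < n")
      case True thus ?thesis by simp
    next
      case False
      hence "Suc i = n" using i by simp
      hence "(i+1) mod n = 0" by simp
      thus ?thesis using i n3 False by simp
    qed
    hence "xs!i \<noteq> xs!((i+1) mod n)" using nth_eq_iff_index_eq[OF xs_dist, of i "(i+1) mod n"] i m xs_len by simp
    then show ?thesis using i xs_in m by blast
  qed
qed

lemma ham: "hamiltonian {1..n} (Tr \<union> Cyc)"
  unfolding hamiltonian_def
proof (rule exI[of _ xs], intro conjI allI impI)
  show "distinct xs" by (rule xs_dist)
  show "set xs = {1..n}" by (rule xs_set)
  show "3 \<le> length xs" using xs_len n3 by simp
  fix i assume "i < length xs"
  hence "i < n" using xs_len by simp
  hence "{xs!i, xs!((i+1) mod n)} \<in> Cyc" unfolding Cyc_def by blast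
  thus "{xs!i, xs!((i+1) mod length xs)} \<in> Tr \<union> Cyc" using xs_len by simp
qed

end


function dep :: "nat \<Rightarrow> nat \<Rightarrow> nat" where
  "dep b v = (if v \<le> 1 then 0 else 1 + dep b (par b v))"
  by auto
termination by (relation "measure snd") (auto intro: par_lt)
declare dep.simps[simp del]

lemma dep_1: "dep b (Suc 0) = 0" by (simp add: dep.simps)
lemma dep_step: "2 \<le> v \<Longrightarrow> dep b v = 1 + dep b (par b v)" by (subst dep.simps) simp

lemma dep_mono: "1 \<le> u \<Longrightarrow> u \<le> v \<Longrightarrow> dep b u \<le> dep b v"
proof (induction v arbitrary: u rule: less_induct)
  case (less v)
  show ?case
  proof (cases "u \<le> 1")
    case True then show ?thesis using less by (simp add: dep.simps)
  next
    case False
    hence "2 \<le> u" "2 \<le> v" using less by auto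
    moreover have "dep b (par b u) \<le> dep b (par b v)"
      using less.IH[OF par_lt[OF \<open>2 \<le> v\<close>] par_ge1 par_mono[OF less.prems(2)]] .
    ultimately show ?thesis by (simp add: dep_step)
  qed
qed

definition reach :: "'a set set \<Rightarrow> 'a \<Rightarrow> 'a \<Rightarrow> nat \<Rightarrow> bool" where
  "reach E u v k \<longleftrightarrow> (\<exists>xs. is_walk E xs \<and> hd xs = u \<and> last xs = v \<and> length xs = k + 1)"

lemma gdist_reach: "gdist E u v = (LEAST k. reach E u v k)"
  unfolding gdist_def reach_def ..

lemma gdist_le: "reach E u v k \<Longrightarrow> gdist E u v \<le> k"
  unfolding gdist_reach by (rule Least_le)

lemma reach_refl: "reach E u u 0"
  unfolding reach_def by (rule exI[of _ "[u]"]) (simp add: is_walk_def)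

lemma reach_snoc: assumes "reach E u v k" "{v, w} \<in> E" shows "reach E u w (k+1)"
proof -
  obtain xs where xs: "is_walk E xs" "hd xs = u" "last xs = v" "length xs = k + 1"
    using assms(1) unfolding reach_def by blast
  have ne: "xs \<noteq> []" using xs(4) by auto
  have "is_walk E (xs @ [w])" unfolding is_walk_def
  proof (intro conjI allI impI)
    show "xs @ [w] \<noteq> []" by simp
    fix i assume i: "i + 1 < length (xs @ [w])"
    show "{(xs @ [w]) ! i, (xs @ [w]) ! (i + 1)} \<in> E"
    proof (cases "i + 1 < length xs")
      case True
      then show ?thesis using xs(1) unfolding is_walk_def by (simp add: nth_append)
    next
      case False
      hence "i = length xs - 1" using i by simp
      hence "(xs @ [w]) ! i = v" "(xs @ [w]) ! (i+1) = w" using xs(3) ne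
        by (auto simp: nth_append last_conv_nth)
      then show ?thesis using assms(2) by simp
    qed
  qed
  thus ?thesis unfolding reach_def using xs ne by (intro exI[of _ "xs @ [w]"]) auto
qed

lemma reach_cons: assumes "reach E v w k" "{u, v} \<in> E" shows "reach E u w (k+1)"
proof -
  obtain xs where xs: "is_walk E xs" "hd xs = v" "last xs = w" "length xs = k + 1"
    using assms(1) unfolding reach_def by blast
  have ne: "xs \<noteq> []" using xs(4) by auto
  have "is_walk E (u # xs)" unfolding is_walk_def
  proof (intro conjI allI impI)
    show "u # xs \<noteq> []" by simp
    fix i assume i: "i + 1 < length (u # xs)"
    show "{(u # xs) ! i, (u # xs) ! (i + 1)} \<in> E"
    proof (cases i)
      case 0
      then show ?thesis using assms(2) xs(2) ne by (simp add: hd_conv_nth)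
    next
      case (Suc j)
      then show ?thesis using xs(1) i unfolding is_walk_def by simp
    qed
  qed
  thus ?thesis unfolding reach_def using xs ne by (intro exI[of _ "u # xs"]) auto
qed

context hc begin

lemma reach_up: "Tr \<subseteq> E \<Longrightarrow> 1 \<le> v \<Longrightarrow> v \<le> n \<Longrightarrow> reach E v 1 (dep b v)"
proof (induction v rule: less_induct)
  case (less v)
  show ?case
  proof (cases "v = 1")
    case True then show ?thesis using reach_refl dep_1 by simp
  next
    case False
    hence v2: "2 \<le> v" using less by simp
    have p: "par b v < v" "1 \<le> par b v" "par b v \<le> n" using par_lt[OF v2, of b] par_ge1[of b v] less.prems by auto
    have "reach E (par b v) 1 (dep b (par b v))"
      using less.IH[OF p(1) less.prems(1) p(2) p(3)] .
    moreover have "{v, par b v} \<in> E" using less.prems v2 unfolding Tr_def by (auto simp: insert_commute)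
    ultimately show ?thesis using reach_cons dep_step[OF v2] by fastforce
  qed
qed

lemma reach_down: "Tr \<subseteq> E \<Longrightarrow> 1 \<le> v \<Longrightarrow> v \<le> n \<Longrightarrow> reach E w 1 k \<Longrightarrow> reach E w v (k + dep b v)"
proof (induction v rule: less_induct)
  case (less v)
  show ?case
  proof (cases "v = 1")
    case True then show ?thesis using less dep_1 by simp
  next
    case False
    hence v2: "2 \<le> v" using less by simp
    have p: "par b v < v" "1 \<le> par b v" "par b v \<le> n" using par_lt[OF v2, of b] par_ge1[of b v] less.prems by auto
    have "reach E w (par b v) (k + dep b (par b v))"
      using less.IH[OF p(1) less.prems(1) p(2) p(3) less.prems(4)] .
    moreover have "{par b v, v} \<in> E" using less.prems v2 unfolding Tr_def by auto
    ultimately show ?thesis using reach_snoc dep_step[OF v2] by fastforce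
  qed
qed

lemma gdist_up: "Tr \<subseteq> E \<Longrightarrow> u \<in> {1..n} \<Longrightarrow> v \<in> {1..n} \<Longrightarrow> gdist E u v \<le> dep b u + dep b v"
proof -
  assume a: "Tr \<subseteq> E" "u \<in> {1..n}" "v \<in> {1..n}"
  have "reach E u 1 (dep b u)" using reach_up[OF a(1)] a(2) by simp
  hence "reach E u v (dep b u + dep b v)" using reach_down[OF a(1)] a(3) by simp
  thus ?thesis by (rule gdist_le)
qed

lemma walk_dep:
  assumes "is_walk Tr ws" "hd ws = 1"
  shows "i < length ws \<Longrightarrow> dep b (ws!i) \<le> i"
proof (induction i)
  case 0 then show ?case using assms by (simp add: hd_conv_nth[symmetric] dep_1 is_walk_def)
next
  case (Suc i)
  have "{ws!i, ws!(i+1)} \<in> Tr" using assms(1) Suc.prems unfolding is_walk_def by simp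
  then obtain j where j: "j \<in> {2..n}" "{ws!i, ws!(i+1)} = {par b j, j}" unfolding Tr_def by auto
  have dj: "dep b j = 1 + dep b (par b j)" using j by (simp add: dep_step)
  have "dep b (ws!(i+1)) \<le> dep b (ws!i) + 1" using j dj by (auto simp: doubleton_eq_iff)
  then show ?case using Suc by simp
qed

lemma gdist_low: "dep b n \<le> gdist Tr 1 n"
proof -
  have ex: "reach Tr 1 n (dep b n)" using reach_down[OF subset_refl _ _ reach_refl, of n] n3 by simp
  have "reach Tr 1 n (gdist Tr 1 n)" unfolding gdist_reach by (rule LeastI[of "reach Tr 1 n", OF ex])
  then obtain ws where ws: "is_walk Tr ws" "hd ws = 1" "last ws = n" "length ws = gdist Tr 1 n + 1"
    unfolding reach_def by blast
  have wne: "ws \<noteq> []" using ws(4) by auto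
  have "ws!(gdist Tr 1 n) = n" using ws(3,4) last_conv_nth[OF wne] by simp
  thus ?thesis using walk_dep[OF ws(1,2), of "gdist Tr 1 n"] ws(4) by simp
qed

lemma tree_eq: "tree_edges n (b+1) = Tr"
proof
  show "tree_edges n (b+1) \<subseteq> Tr"
  proof
    fix e assume "e \<in> tree_edges n (b+1)"
    then obtain i j where ij: "e = {i,j}" "1 \<le> i" "i \<le> n" "b*(i-1)+2 \<le> j" "j \<le> b*i+1" "j \<le> n"
      unfolding tree_edges_def by auto
    have "j \<in> set (kids b n i)" using ij by (auto simp: kids_def)
    hence "2 \<le> j \<and> j \<le> n \<and> par b j = i" using kids_iff[OF b1 ij(2)] by blast
    thus "e \<in> Tr" unfolding Tr_def using ij(1) by auto
  qed
  show "Tr \<subseteq> tree_edges n (b+1)"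
  proof
    fix e assume "e \<in> Tr"
    then obtain j where j: "j \<in> {2..n}" "e = {par b j, j}" unfolding Tr_def by auto
    have "j \<in> set (kids b n (par b j))" using kids_iff[OF b1 par_ge1] j by simp
    hence "b*(par b j-1)+2 \<le> j" "j \<le> b*(par b j)+1" by (auto simp: kids_def)
    moreover have "par b j \<le> n" using par_le[of j b] j by simp
    ultimately show "e \<in> tree_edges n (b+1)" unfolding tree_edges_def using j par_ge1
      by (intro CollectI exI[of _ "par b j"] exI[of _ j]) auto
  qed
qed

lemma height: "dep b n \<le> tree_height n (b+1)"
proof -
  have "gdist (tree_edges n (b+1)) 1 n \<in> {gdist (tree_edges n (b+1)) 1 v | v. v \<in> {1..n}}" using n3 by auto
  moreover have "finite {gdist (tree_edges n (b+1)) 1 v | v. v \<in> {1..n}}"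
  proof -
    have "{gdist (tree_edges n (b+1)) 1 v | v. v \<in> {1..n}} = (\<lambda>v. gdist (tree_edges n (b+1)) 1 v) ` {1..n}" by auto
    thus ?thesis by simp
  qed
  ultimately have "gdist (tree_edges n (b+1)) 1 n \<le> tree_height n (b+1)" unfolding tree_height_def using Max_ge by blast
  thus ?thesis using gdist_low tree_eq by simp
qed

lemma diam: "Tr \<subseteq> E \<Longrightarrow> diameter {1..n} E \<le> 2 * tree_height n (b+1)"
proof -
  assume TE: "Tr \<subseteq> E"
  have S: "{gdist E u v | u v. u \<in> {1..n} \<and> v \<in> {1..n}} \<subseteq> (\<lambda>(u,v). gdist E u v) ` ({1..n} \<times> {1..n})"
  proof
    fix x assume "x \<in> {gdist E u v | u v. u \<in> {1..n} \<and> v \<in> {1..n}}"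
    then obtain u v where "x = gdist E u v" "u \<in> {1..n}" "v \<in> {1..n}" by blast
    thus "x \<in> (\<lambda>(u,v). gdist E u v) ` ({1..n} \<times> {1..n})" by (intro image_eqI[of _ _ "(u,v)"]) auto
  qed
  have fin: "finite {gdist E u v | u v. u \<in> {1..n} \<and> v \<in> {1..n}}" by (rule finite_subset[OF S]) simp
  have ne: "{gdist E u v | u v. u \<in> {1..n} \<and> v \<in> {1..n}} \<noteq> {}" using n3 by (auto intro!: exI[of _ 1])
  have "\<forall>x \<in> {gdist E u v | u v. u \<in> {1..n} \<and> v \<in> {1..n}}. x \<le> 2 * dep b n"
  proof
    fix x assume "x \<in> {gdist E u v | u v. u \<in> {1..n} \<and> v \<in> {1..n}}"
    then obtain u v where uv: "x = gdist E u v" "u \<in> {1..n}" "v \<in> {1..n}" by auto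
    have "x \<le> dep b u + dep b v" using gdist_up[OF TE uv(2,3)] uv(1) by simp
    moreover have "dep b u \<le> dep b n" "dep b v \<le> dep b n" using dep_mono uv by auto
    ultimately show "x \<le> 2 * dep b n" by simp
  qed
  hence "diameter {1..n} E \<le> 2 * dep b n" unfolding diameter_def using Max_le_iff[OF fin ne] by blast
  thus ?thesis using height by simp
qed

end


lemma final_arith:
  fixes B N F L C :: real
  assumes B3: "B \<ge> 3" and N1: "N \<ge> 1"
    and c1: "C \<le> N - 1 + F"
    and c2: "(B + 1) * F - (B - 1) * N \<le> (2*B - 4) * L + 2"
    and c3: "(2*B - 4) * L \<le> (B - 1) * N / B^3 + (5*B - 6)*(B + 1)/2"
  shows "C \<le> (2 - 1 / B - (B - 1)^2 / B^3) * N + (B - 2) / 2 + 2 * (B - 1)"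
proof -
  have Bp: "B > 0" "B + 1 > 0" using B3 by auto
  have id: "(B+1) * ((2 - 1 / B - (B - 1)^2 / B^3) * N + (B - 2) / 2 + 2 * (B - 1)) =
     (B+1)*(N - 1) + (B-1)*N + (B-1)*N/B^3 + (5*B-6)*(B+1)/2 + 2 + (B - 1)"
    using Bp by (simp add: field_simps power2_eq_square power3_eq_cube)
  have "(B+1) * F \<le> (B-1)*N + (B-1)*N/B^3 + (5*B-6)*(B+1)/2 + 2" using c2 c3 by linarith
  hence "(B+1) * (N - 1 + F) \<le> (B+1)*(N - 1) + (B-1)*N + (B-1)*N/B^3 + (5*B-6)*(B+1)/2 + 2"
    by (simp add: algebra_simps)
  also have "\<dots> \<le> (B+1) * ((2 - 1 / B - (B - 1)^2 / B^3) * N + (B - 2) / 2 + 2 * (B - 1))"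
    unfolding id using B3 by simp
  finally have "N - 1 + F \<le> (2 - 1 / B - (B - 1)^2 / B^3) * N + (B - 2) / 2 + 2 * (B - 1)"
    using Bp(2) by (simp only: mult_le_cancel_left_pos)
  thus ?thesis using c1 by linarith
qed

theorem mainTheorem7:
  fixes \<Delta> n :: nat
  assumes "\<Delta> \<ge> 4" and "n \<ge> 3"
  shows "\<exists>E :: nat set set. simple_graph {1..n} E \<and> hamiltonian {1..n} E \<and>
    (\<forall>v\<in>{1..n}. degree E v \<le> \<Delta>) \<and>
    diameter {1..n} E \<le> 2 * tree_height n \<Delta> \<and>
    real (card E) \<le> (2 - 1 / (real \<Delta> - 1) - (real \<Delta> - 2)^2 / (real \<Delta> - 1)^3) * real n
      + (real \<Delta> - 3) / 2 + 2 * (real \<Delta> - 2)"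
proof -
  define b where "b = \<Delta> - 1"
  have b3: "b \<ge> 3" and Db: "\<Delta> = b + 1" using assms(1) unfolding b_def by auto
  interpret hc b n using b3 assms(2) by unfold_locales
  have d: "diameter {1..n} (Tr \<union> Cyc) \<le> 2 * tree_height n \<Delta>" using diam[of "Tr \<union> Cyc"] Db by simp
  have dg: "\<forall>v\<in>{1..n}. degree (Tr \<union> Cyc) v \<le> \<Delta>" using deg Db by simp
  define F where "F = Fc b n"
  define L where "L = ell b n"
  have c1: "card (Tr \<union> Cyc) \<le> (n - 1) + F" using edges F_def by simp
  have c1': "real (card (Tr \<union> Cyc)) \<le> real n - 1 + real F"
  proof -
    have "real (card (Tr \<union> Cyc)) \<le> real ((n - 1) + F)" using c1 by (simp only: of_nat_le_iff)
    thus ?thesis using assms(2) by (simp add: of_nat_diff)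
  qed
  have x: "(int b + 1) * int F - (int b - 1) * int n \<le> (2*int b - 4) * int L + 2"
    using Xbound[OF b3, of n] unfolding F_def L_def by linarith
  have c2: "(real b + 1) * real F - (real b - 1) * real n \<le> (2*real b - 4) * real L + 2"
  proof -
    have "real_of_int ((int b + 1) * int F - (int b - 1) * int n) \<le> real_of_int ((2*int b - 4) * int L + 2)"
      using x by (simp only: of_int_le_iff)
    thus ?thesis by simp
  qed
  have c3: "(2*real b - 4) * real L \<le> (real b - 1) * real n / real b^3 + (5*real b - 6)*(real b + 1)/2"
    using ell_bound[OF b3, of n] unfolding L_def .
  have fa: "real (card (Tr \<union> Cyc)) \<le> (2 - 1 / real b - (real b - 1)^2 / real b^3) * real n + (real b - 2) / 2 + 2 * (real b - 1)"
    by (rule final_arith[OF _ _ c1' c2 c3]) (use b3 assms(2) in auto)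
  have rD: "real \<Delta> - 1 = real b" "real \<Delta> - 2 = real b - 1" "real \<Delta> - 3 = real b - 2" using Db by auto
  show ?thesis
    apply (rule exI[of _ "Tr \<union> Cyc"])
    using simple ham dg d fa unfolding rD by auto
qed


end
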